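(* For all $n\ge0$, $\ell\ge1$ and every $\varphi\in\mathcal{B}\Sigma_{n,\ell}$, there exists a formula $\varphi'\in\mathrm{FOC}(\{\mathsf{P}_\exists\})$ equivalent to $\varphi$ such that $\mathrm{free}(\varphi')=\mathrm{free}(\varphi)$, $\mathrm{bw}(\varphi')\le\ell$ and $\mathrm{br}(\varphi')\le n$.
   Context: $\mathcal{B}\Sigma_{0,\ell}$ is the set of quantifier-free first-order formulas; a formula belongs to $\mathcal{B}\Sigma_{n+1,\ell}$ if it is a Boolean combination of formulas $\exists x_1\cdots\exists x_k\,\psi$ with $k\le\ell$ and $\psi\in\mathcal{B}\Sigma_{n,\ell}$. $\mathsf{P}_\exists$ is a unary numerical predicate with semantics $\{1,2,3,\dots\}$. The logic $\mathrm{FOC}(\{\mathsf{P}_\exists\})$ consists of formulas and counting terms built by: atomic first-order formulas; $\neg$, $\vee$; $\exists y$ for (structure) variables $y$; $\mathsf{P}_\exists(t)$ for a counting term $t$, true iff the value of $t$ is $\ge1$; counting terms $\#\bar y.\varphi$ for a tuple $\bar y$ of $\ge1$ pairwise distinct variables, with value the number of tuples of elements satisfying $\varphi$ for $\bar y$; integers; $(t_1+t_2)$, $(t_1\cdot t_2)$. Two formulas are equivalent if they agree in all (finite) structures under all assignments. $\mathrm{br}$ is the maximal nesting depth of constructs $\exists y$ and $\#\bar y$; $\mathrm{bw}$ is the maximal $|\bar y|$ over counting terms $\#\bar y.\psi$ occurring, and if none occurs, $1$ if some $\exists y$ occurs and $0$ otherwise. *)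

theory Defs
  imports Main
begin

text \<open>A (finite) structure is given by a finite nonempty universe U of elements
(taken WLOG from nat: every finite structure is isomorphic to one on a subset of nat)
and an interpretation I of the relation symbols ('r) as predicates on tuples (lists).\<close>

definition upd :: "(nat \<Rightarrow> nat) \<Rightarrow> nat list \<Rightarrow> nat list \<Rightarrow> nat \<Rightarrow> nat" where
  "upd \<beta> ys as = (\<lambda>v. case map_of (zip ys as) v of Some a \<Rightarrow> a | None \<Rightarrow> \<beta> v)"

datatype 'r fo =
    Atom 'r "nat list"
  | Eq nat nat
  | Neg "'r fo"
  | Or "'r fo" "'r fo"
  | Ex nat "'r fo"

fun sat_fo :: "nat set \<Rightarrow> ('r \<Rightarrow> nat list \<Rightarrow> bool) \<Rightarrow> (nat \<Rightarrow> nat) \<Rightarrow> 'r fo \<Rightarrow> bool" where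
  "sat_fo U I \<beta> (Atom r xs) = I r (map \<beta> xs)"
| "sat_fo U I \<beta> (Eq x y) = (\<beta> x = \<beta> y)"
| "sat_fo U I \<beta> (Neg \<phi>) = (\<not> sat_fo U I \<beta> \<phi>)"
| "sat_fo U I \<beta> (Or \<phi> \<psi>) = (sat_fo U I \<beta> \<phi> \<or> sat_fo U I \<beta> \<psi>)"
| "sat_fo U I \<beta> (Ex x \<phi>) = (\<exists>a\<in>U. sat_fo U I (\<beta>(x := a)) \<phi>)"

fun free_fo :: "'r fo \<Rightarrow> nat set" where
  "free_fo (Atom r xs) = set xs"
| "free_fo (Eq x y) = {x, y}"
| "free_fo (Neg \<phi>) = free_fo \<phi>"
| "free_fo (Or \<phi> \<psi>) = free_fo \<phi> \<union> free_fo \<psi>"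
| "free_fo (Ex x \<phi>) = free_fo \<phi> - {x}"

fun qfree :: "'r fo \<Rightarrow> bool" where
  "qfree (Atom r xs) = True"
| "qfree (Eq x y) = True"
| "qfree (Neg \<phi>) = qfree \<phi>"
| "qfree (Or \<phi> \<psi>) = (qfree \<phi> \<and> qfree \<psi>)"
| "qfree (Ex x \<phi>) = False"

definition ex_block :: "nat list \<Rightarrow> 'r fo \<Rightarrow> 'r fo" where
  "ex_block xs \<psi> = foldr Ex xs \<psi>"

inductive bool_comb :: "'r fo set \<Rightarrow> 'r fo \<Rightarrow> bool" for S where
  base: "\<phi> \<in> S \<Longrightarrow> bool_comb S \<phi>"
| neg: "bool_comb S \<phi> \<Longrightarrow> bool_comb S (Neg \<phi>)"
| disj: "bool_comb S \<phi> \<Longrightarrow> bool_comb S \<psi> \<Longrightarrow> bool_comb S (Or \<phi> \<psi>)"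

fun BSigma :: "nat \<Rightarrow> nat \<Rightarrow> 'r fo set" where
  "BSigma 0 l = {\<phi>. qfree \<phi>}"
| "BSigma (Suc n) l =
     {\<phi>. bool_comb {ex_block xs \<psi> | xs \<psi>. length xs \<le> l \<and> \<psi> \<in> BSigma n l} \<phi>}"

datatype 'r focf =
    FAtom 'r "nat list"
  | FEq nat nat
  | FNeg "'r focf"
  | FOr "'r focf" "'r focf"
  | FEx nat "'r focf"
  | FPex "'r foct"
and 'r foct =
    Count "nat list" "'r focf"
  | Const int
  | Plus "'r foct" "'r foct"
  | Times "'r foct" "'r foct"

fun sat_foc :: "nat set \<Rightarrow> ('r \<Rightarrow> nat list \<Rightarrow> bool) \<Rightarrow> (nat \<Rightarrow> nat) \<Rightarrow> 'r focf \<Rightarrow> bool"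
and val_foc :: "nat set \<Rightarrow> ('r \<Rightarrow> nat list \<Rightarrow> bool) \<Rightarrow> (nat \<Rightarrow> nat) \<Rightarrow> 'r foct \<Rightarrow> int" where
  "sat_foc U I \<beta> (FAtom r xs) = I r (map \<beta> xs)"
| "sat_foc U I \<beta> (FEq x y) = (\<beta> x = \<beta> y)"
| "sat_foc U I \<beta> (FNeg \<phi>) = (\<not> sat_foc U I \<beta> \<phi>)"
| "sat_foc U I \<beta> (FOr \<phi> \<psi>) = (sat_foc U I \<beta> \<phi> \<or> sat_foc U I \<beta> \<psi>)"
| "sat_foc U I \<beta> (FEx x \<phi>) = (\<exists>a\<in>U. sat_foc U I (\<beta>(x := a)) \<phi>)"
| "sat_foc U I \<beta> (FPex t) = (val_foc U I \<beta> t \<ge> 1)"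
| "val_foc U I \<beta> (Count ys \<phi>) =
     int (card {as. length as = length ys \<and> set as \<subseteq> U \<and> sat_foc U I (upd \<beta> ys as) \<phi>})"
| "val_foc U I \<beta> (Const i) = i"
| "val_foc U I \<beta> (Plus s t) = val_foc U I \<beta> s + val_foc U I \<beta> t"
| "val_foc U I \<beta> (Times s t) = val_foc U I \<beta> s * val_foc U I \<beta> t"

fun wf_f :: "'r focf \<Rightarrow> bool" and wf_t :: "'r foct \<Rightarrow> bool" where
  "wf_f (FAtom r xs) = True"
| "wf_f (FEq x y) = True"
| "wf_f (FNeg \<phi>) = wf_f \<phi>"
| "wf_f (FOr \<phi> \<psi>) = (wf_f \<phi> \<and> wf_f \<psi>)"
| "wf_f (FEx x \<phi>) = wf_f \<phi>"
| "wf_f (FPex t) = wf_t t"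
| "wf_t (Count ys \<phi>) = (ys \<noteq> [] \<and> distinct ys \<and> wf_f \<phi>)"
| "wf_t (Const i) = True"
| "wf_t (Plus s t) = (wf_t s \<and> wf_t t)"
| "wf_t (Times s t) = (wf_t s \<and> wf_t t)"

fun free_f :: "'r focf \<Rightarrow> nat set" and free_t :: "'r foct \<Rightarrow> nat set" where
  "free_f (FAtom r xs) = set xs"
| "free_f (FEq x y) = {x, y}"
| "free_f (FNeg \<phi>) = free_f \<phi>"
| "free_f (FOr \<phi> \<psi>) = free_f \<phi> \<union> free_f \<psi>"
| "free_f (FEx x \<phi>) = free_f \<phi> - {x}"
| "free_f (FPex t) = free_t t"
| "free_t (Count ys \<phi>) = free_f \<phi> - set ys"
| "free_t (Const i) = {}"
| "free_t (Plus s t) = free_t s \<union> free_t t"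
| "free_t (Times s t) = free_t s \<union> free_t t"

fun br_f :: "'r focf \<Rightarrow> nat" and br_t :: "'r foct \<Rightarrow> nat" where
  "br_f (FAtom r xs) = 0"
| "br_f (FEq x y) = 0"
| "br_f (FNeg \<phi>) = br_f \<phi>"
| "br_f (FOr \<phi> \<psi>) = max (br_f \<phi>) (br_f \<psi>)"
| "br_f (FEx x \<phi>) = Suc (br_f \<phi>)"
| "br_f (FPex t) = br_t t"
| "br_t (Count ys \<phi>) = Suc (br_f \<phi>)"
| "br_t (Const i) = 0"
| "br_t (Plus s t) = max (br_t s) (br_t t)"
| "br_t (Times s t) = max (br_t s) (br_t t)"

fun cw_f :: "'r focf \<Rightarrow> nat" and cw_t :: "'r foct \<Rightarrow> nat" where
  "cw_f (FAtom r xs) = 0"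
| "cw_f (FEq x y) = 0"
| "cw_f (FNeg \<phi>) = cw_f \<phi>"
| "cw_f (FOr \<phi> \<psi>) = max (cw_f \<phi>) (cw_f \<psi>)"
| "cw_f (FEx x \<phi>) = cw_f \<phi>"
| "cw_f (FPex t) = cw_t t"
| "cw_t (Count ys \<phi>) = max (length ys) (cw_f \<phi>)"
| "cw_t (Const i) = 0"
| "cw_t (Plus s t) = max (cw_t s) (cw_t t)"
| "cw_t (Times s t) = max (cw_t s) (cw_t t)"

fun hc_f :: "'r focf \<Rightarrow> bool" and hc_t :: "'r foct \<Rightarrow> bool" where
  "hc_f (FAtom r xs) = False"
| "hc_f (FEq x y) = False"
| "hc_f (FNeg \<phi>) = hc_f \<phi>"
| "hc_f (FOr \<phi> \<psi>) = (hc_f \<phi> \<or> hc_f \<psi>)"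
| "hc_f (FEx x \<phi>) = hc_f \<phi>"
| "hc_f (FPex t) = hc_t t"
| "hc_t (Count ys \<phi>) = True"
| "hc_t (Const i) = False"
| "hc_t (Plus s t) = (hc_t s \<or> hc_t t)"
| "hc_t (Times s t) = (hc_t s \<or> hc_t t)"

fun he_f :: "'r focf \<Rightarrow> bool" and he_t :: "'r foct \<Rightarrow> bool" where
  "he_f (FAtom r xs) = False"
| "he_f (FEq x y) = False"
| "he_f (FNeg \<phi>) = he_f \<phi>"
| "he_f (FOr \<phi> \<psi>) = (he_f \<phi> \<or> he_f \<psi>)"
| "he_f (FEx x \<phi>) = True"
| "he_f (FPex t) = he_t t"
| "he_t (Count ys \<phi>) = he_f \<phi>"
| "he_t (Const i) = False"
| "he_t (Plus s t) = (he_t s \<or> he_t t)"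
| "he_t (Times s t) = (he_t s \<or> he_t t)"

definition bw :: "'r focf \<Rightarrow> nat" where
  "bw \<phi> = (if hc_f \<phi> then cw_f \<phi> else if he_f \<phi> then 1 else 0)"

definition br :: "'r focf \<Rightarrow> nat" where
  "br \<phi> = br_f \<phi>"

definition equiv_fo_foc :: "'r fo \<Rightarrow> 'r focf \<Rightarrow> bool" where
  "equiv_fo_foc \<phi> \<psi> \<longleftrightarrow>
     (\<forall>U I \<beta>. finite U \<and> U \<noteq> {} \<and> range \<beta> \<subseteq> U \<longrightarrow>
        (sat_fo U I \<beta> \<phi> \<longleftrightarrow> sat_foc U I \<beta> \<psi>))"

end

theory Submission
  imports Defs
begin

fun tr :: "'r fo \<Rightarrow> 'r focf" where
  "tr (Atom r xs) = FAtom r xs"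
| "tr (Eq x y) = FEq x y"
| "tr (Neg \<phi>) = FNeg (tr \<phi>)"
| "tr (Or \<phi> \<psi>) = FOr (tr \<phi>) (tr \<psi>)"
| "tr (Ex x \<phi>) = FEx x (tr \<phi>)"

lemma tr_sat: "sat_foc U I \<beta> (tr \<phi>) = sat_fo U I \<beta> \<phi>"
  by (induction \<phi> arbitrary: \<beta>) auto

lemma tr_props: "wf_f (tr \<phi>) \<and> free_f (tr \<phi>) = free_fo \<phi> \<and> cw_f (tr \<phi>) = 0"
  by (induction \<phi>) auto

lemma tr_br: "qfree \<phi> \<Longrightarrow> br_f (tr \<phi>) = 0"
  by (induction \<phi>) auto

lemma ex_block_sat:
  "sat_fo U I \<beta> (ex_block xs \<psi>) \<longleftrightarrow>
    (\<exists>\<gamma>. (\<forall>v. v \<notin> set xs \<longrightarrow> \<gamma> v = \<beta> v) \<and> (\<forall>v\<in>set xs. \<gamma> v \<in> U) \<and> sat_fo U I \<gamma> \<psi>)"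
proof (induction xs arbitrary: \<beta>)
  case Nil
  then show ?case by (simp add: ex_block_def fun_eq_iff[symmetric])
next
  case (Cons x xs)
  have "sat_fo U I \<beta> (ex_block (x # xs) \<psi>) \<longleftrightarrow> (\<exists>a\<in>U. sat_fo U I (\<beta>(x := a)) (ex_block xs \<psi>))"
    by (simp add: ex_block_def)
  also have "\<dots> \<longleftrightarrow> (\<exists>\<gamma>. (\<forall>v. v \<notin> set (x#xs) \<longrightarrow> \<gamma> v = \<beta> v) \<and> (\<forall>v\<in>set (x#xs). \<gamma> v \<in> U) \<and> sat_fo U I \<gamma> \<psi>)"
  proof
    assume "\<exists>a\<in>U. sat_fo U I (\<beta>(x := a)) (ex_block xs \<psi>)"
    then obtain a \<gamma> where a: "a \<in> U" and g: "\<forall>v. v \<notin> set xs \<longrightarrow> \<gamma> v = (\<beta>(x:=a)) v"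
      "\<forall>v\<in>set xs. \<gamma> v \<in> U" "sat_fo U I \<gamma> \<psi>" using Cons by blast
    have "\<gamma> x \<in> U" using a g by (cases "x \<in> set xs") auto
    then show "\<exists>\<gamma>. (\<forall>v. v \<notin> set (x#xs) \<longrightarrow> \<gamma> v = \<beta> v) \<and> (\<forall>v\<in>set (x#xs). \<gamma> v \<in> U) \<and> sat_fo U I \<gamma> \<psi>"
      using g by (intro exI[of _ \<gamma>]) auto
  next
    assume "\<exists>\<gamma>. (\<forall>v. v \<notin> set (x#xs) \<longrightarrow> \<gamma> v = \<beta> v) \<and> (\<forall>v\<in>set (x#xs). \<gamma> v \<in> U) \<and> sat_fo U I \<gamma> \<psi>"
    then obtain \<gamma> where g: "\<forall>v. v \<notin> set (x#xs) \<longrightarrow> \<gamma> v = \<beta> v" "\<forall>v\<in>set (x#xs). \<gamma> v \<in> U" "sat_fo U I \<gamma> \<psi>"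
      by blast
    have "sat_fo U I (\<beta>(x := \<gamma> x)) (ex_block xs \<psi>)"
      using Cons g by (intro Cons.IH[THEN iffD2] exI[of _ \<gamma>]) auto
    then show "\<exists>a\<in>U. sat_fo U I (\<beta>(x := a)) (ex_block xs \<psi>)" using g by auto
  qed
  finally show ?case .
qed

lemma fst_zip: "length as = length ys \<Longrightarrow> fst ` set (zip ys as) = set ys"
  by (metis map_fst_zip set_map)

lemma upd_out: "length as = length ys \<Longrightarrow> v \<notin> set ys \<Longrightarrow> upd \<beta> ys as v = \<beta> v"
proof -
  assume "length as = length ys" "v \<notin> set ys"
  then have "map_of (zip ys as) v = None" by (simp add: map_of_eq_None_iff fst_zip)
  then show ?thesis by (simp add: upd_def)
qed

lemma upd_in: "length as = length ys \<Longrightarrow> v \<in> set ys \<Longrightarrow> upd \<beta> ys as v \<in> set as"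
proof -
  assume l: "length as = length ys" and v: "v \<in> set ys"
  have "map_of (zip ys as) v \<noteq> None" using l v by (simp add: map_of_eq_None_iff fst_zip)
  then obtain a where a: "map_of (zip ys as) v = Some a" by blast
  then have "(v, a) \<in> set (zip ys as)" by (rule map_of_SomeD)
  then have "a \<in> set as" by (rule set_zip_rightD)
  then show ?thesis using a by (simp add: upd_def)
qed

lemma upd_map: "upd \<beta> ys (map \<gamma> ys) = (\<lambda>v. if v \<in> set ys then \<gamma> v else \<beta> v)"
  unfolding upd_def by (auto simp: map_of_zip_map)

lemma count_sat:
  assumes fin: "finite U"
    and eq: "\<And>\<beta>. sat_foc U I \<beta> \<psi>' = sat_fo U I \<beta> \<psi>"
  shows "sat_foc U I \<beta> (FPex (Count (remdups xs) \<psi>')) = sat_fo U I \<beta> (ex_block xs \<psi>)"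
proof -
  define ys where "ys = remdups xs"
  have sy: "set ys = set xs" by (simp add: ys_def)
  define A where "A = {as. length as = length ys \<and> set as \<subseteq> U \<and> sat_foc U I (upd \<beta> ys as) \<psi>'}"
  have "A \<subseteq> {as. set as \<subseteq> U \<and> length as = length ys}" by (auto simp: A_def)
  then have finA: "finite A" using finite_lists_length_eq[OF fin] finite_subset by blast
  have "sat_foc U I \<beta> (FPex (Count ys \<psi>')) \<longleftrightarrow> A \<noteq> {}"
    using finA by (simp add: A_def[symmetric] Suc_le_eq card_gt_0_iff)
  also have "\<dots> \<longleftrightarrow> (\<exists>\<gamma>. (\<forall>v. v \<notin> set xs \<longrightarrow> \<gamma> v = \<beta> v) \<and> (\<forall>v\<in>set xs. \<gamma> v \<in> U) \<and> sat_fo U I \<gamma> \<psi>)"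
  proof
    assume "A \<noteq> {}"
    then obtain as where as: "length as = length ys" "set as \<subseteq> U" "sat_fo U I (upd \<beta> ys as) \<psi>"
      by (auto simp: A_def eq)
    show "\<exists>\<gamma>. (\<forall>v. v \<notin> set xs \<longrightarrow> \<gamma> v = \<beta> v) \<and> (\<forall>v\<in>set xs. \<gamma> v \<in> U) \<and> sat_fo U I \<gamma> \<psi>"
      using as upd_out[OF as(1)] upd_in[OF as(1)] sy by (intro exI[of _ "upd \<beta> ys as"]) blast
  next
    assume "\<exists>\<gamma>. (\<forall>v. v \<notin> set xs \<longrightarrow> \<gamma> v = \<beta> v) \<and> (\<forall>v\<in>set xs. \<gamma> v \<in> U) \<and> sat_fo U I \<gamma> \<psi>"
    then obtain \<gamma> where g: "\<forall>v. v \<notin> set xs \<longrightarrow> \<gamma> v = \<beta> v" "\<forall>v\<in>set xs. \<gamma> v \<in> U" "sat_fo U I \<gamma> \<psi>"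
      by blast
    have "upd \<beta> ys (map \<gamma> ys) = \<gamma>" using g sy by (auto simp: upd_map)
    then have "map \<gamma> ys \<in> A" using g sy by (auto simp: A_def eq)
    then show "A \<noteq> {}" by blast
  qed
  also have "\<dots> \<longleftrightarrow> sat_fo U I \<beta> (ex_block xs \<psi>)" by (rule ex_block_sat[symmetric])
  finally show ?thesis by (simp add: ys_def)
qed

lemma free_ex_block: "free_fo (ex_block xs \<psi>) = free_fo \<psi> - set xs"
  by (induction xs) (auto simp: ex_block_def)

definition good :: "nat \<Rightarrow> nat \<Rightarrow> 'r fo \<Rightarrow> 'r focf \<Rightarrow> bool" where
  "good n l \<phi> \<phi>' \<longleftrightarrow> wf_f \<phi>' \<and> (\<forall>U I \<beta>. finite U \<longrightarrow> sat_foc U I \<beta> \<phi>' = sat_fo U I \<beta> \<phi>)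
     \<and> free_f \<phi>' = free_fo \<phi> \<and> cw_f \<phi>' \<le> l \<and> br_f \<phi>' \<le> n"

lemma main: "\<phi> \<in> BSigma n l \<Longrightarrow> \<exists>\<phi>'. good n l \<phi> \<phi>'"
proof (induction n arbitrary: \<phi>)
  case 0
  then show ?case using tr_sat tr_props[of \<phi>] tr_br[of \<phi>]
    by (intro exI[of _ "tr \<phi>"]) (auto simp: good_def)
next
  case (Suc n)
  let ?S = "{ex_block xs \<psi> | xs \<psi>. length xs \<le> l \<and> \<psi> \<in> BSigma n l}"
  have "bool_comb ?S \<phi>" using Suc.prems by simp
  then show ?case
  proof (induction rule: bool_comb.induct)
    case (base \<phi>)
    then obtain xs \<psi> where p: "\<phi> = ex_block xs \<psi>" "length xs \<le> l" "\<psi> \<in> BSigma n l" by blast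
    obtain \<psi>' where g: "good n l \<psi> \<psi>'" using Suc.IH p(3) by blast
    show ?case
    proof (cases "xs = []")
      case True
      then show ?thesis using g p by (intro exI[of _ \<psi>']) (auto simp: good_def ex_block_def)
    next
      case False
      have "length (remdups xs) \<le> l" using p(2) length_remdups_leq le_trans by blast
      moreover have "remdups xs \<noteq> []" using False by simp
      ultimately show ?thesis using g p count_sat[where \<psi>'=\<psi>' and \<psi>=\<psi>]
        by (intro exI[of _ "FPex (Count (remdups xs) \<psi>')"]) (auto simp: good_def free_ex_block)
    qed
  next
    case (neg \<phi>)
    then obtain \<phi>' where "good (Suc n) l \<phi> \<phi>'" by blast
    then show ?case by (intro exI[of _ "FNeg \<phi>'"]) (auto simp: good_def)
  next
    case (disj \<phi> \<psi>)
    then obtain \<phi>' \<psi>' where "good (Suc n) l \<phi> \<phi>'" "good (Suc n) l \<psi> \<psi>'" by blast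
    then show ?case by (intro exI[of _ "FOr \<phi>' \<psi>'"]) (auto simp: good_def)
  qed
qed

theorem lemma5p5:
  fixes n l :: nat and \<phi> :: "'r fo"
  assumes "l \<ge> 1" and "\<phi> \<in> BSigma n l"
  shows "\<exists>\<phi>' :: 'r focf. wf_f \<phi>' \<and> equiv_fo_foc \<phi> \<phi>' \<and> free_f \<phi>' = free_fo \<phi>
           \<and> bw \<phi>' \<le> l \<and> br \<phi>' \<le> n"
proof -
  obtain \<phi>' where g: "good n l \<phi> \<phi>'" using main assms(2) by blast
  show ?thesis using g assms(1)
    by (intro exI[of _ \<phi>']) (auto simp: good_def equiv_fo_foc_def bw_def br_def)
qed

end
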